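(* Let $\phi$ be a uniformly convex N-function with indices $p^-$ and $p^+$, let $\Omega\subset\mathbb{R}^n$ be open, and let $0<\delta^-\le1\le\delta^+<\infty$, $\delta=(\delta^-,\delta^+)$. Then $$L^{p^-}(\Omega)\cap L^{p^+}(\Omega)\cap L^2(\Omega)\hookrightarrow L^{\phi_\delta}(\Omega)\hookrightarrow L^{p^-}(\Omega)+L^{p^+}(\Omega)+L^2(\Omega),$$ with embedding constants bounded uniformly with respect to $\delta$.
   Context: An N-function is a function $\phi:[0,\infty)\to[0,\infty)$ with right-continuous non-decreasing derivative $\phi'$, $\phi'(0)=0$, $\phi'(t)>0$ for $t>0$, $\phi'(t)\to\infty$, $\phi(t)=\int_0^t\phi'$. It is uniformly convex if $\phi\in C^1([0,\infty))\cap C^2((0,\infty))$ and $p^-:=\inf_{t>0}\frac{\phi''(t)t}{\phi'(t)}+1>1$, $p^+:=\sup_{t>0}\frac{\phi''(t)t}{\phi'(t)}+1<\infty$. The truncated N-function $\phi_\delta$ is defined by $\phi_\delta'(t):=\frac{\phi'(\max(\delta^-,\min(t,\delta^+)))}{\max(\delta^-,\min(t,\delta^+))}\,t$, $\phi_\delta(t)=\int_0^t\phi_\delta'$. $L^{\phi_\delta}(\Omega)$ is the Orlicz space with Luxemburg norm $\|v\|=\inf\{\lambda>0:\int_\Omega\phi_\delta(|v|/\lambda)\le1\}$. Intersections of Lebesgue spaces carry the maximum of the norms, sums carry the infimum over decompositions of the sum of the norms. *)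

theory Defs
  imports "HOL-Analysis.Analysis"
begin

text \<open>An N-function: phi(t) = integral of a right-continuous non-decreasing phi'
  on [0,t], with phi'(0)=0, phi'(t)>0 for t>0 and phi'(t) tending to infinity.
  Only the values on [0,infinity) matter.\<close>
definition N_function :: "(real \<Rightarrow> real) \<Rightarrow> bool" where
  "N_function \<phi> \<longleftrightarrow> (\<exists>\<phi>'. mono_on {0..} \<phi>' \<and> (\<forall>t\<ge>0. continuous (at_right t) \<phi>') \<and>
     \<phi>' 0 = 0 \<and> (\<forall>t>0. \<phi>' t > 0) \<and> filterlim \<phi>' at_top at_top \<and>
     (\<forall>t\<ge>0. \<phi> t = integral {0..t} \<phi>'))"

definition p_minus :: "(real \<Rightarrow> real) \<Rightarrow> (real \<Rightarrow> real) \<Rightarrow> real" where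
  "p_minus \<phi>' \<phi>'' = Inf {\<phi>'' t * t / \<phi>' t + 1 | t. t > 0}"

definition p_plus :: "(real \<Rightarrow> real) \<Rightarrow> (real \<Rightarrow> real) \<Rightarrow> real" where
  "p_plus \<phi>' \<phi>'' = Sup {\<phi>'' t * t / \<phi>' t + 1 | t. t > 0}"

text \<open>Uniformly convex N-function phi with derivative phi' (C^1 on [0,infinity),
  one-sided at 0) and second derivative phi'' (C^2 on (0,infinity));
  p^- > 1 and p^+ < infinity (the latter = the quotient set is bounded above).\<close>
definition uniformly_convex :: "(real \<Rightarrow> real) \<Rightarrow> (real \<Rightarrow> real) \<Rightarrow> (real \<Rightarrow> real) \<Rightarrow> bool" where
  "uniformly_convex \<phi> \<phi>' \<phi>'' \<longleftrightarrow> N_function \<phi> \<and>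
     (\<forall>t\<ge>0. (\<phi> has_real_derivative \<phi>' t) (at t within {0..})) \<and> continuous_on {0..} \<phi>' \<and>
     (\<forall>t>0. (\<phi>' has_real_derivative \<phi>'' t) (at t)) \<and> continuous_on {0<..} \<phi>'' \<and>
     bdd_below {\<phi>'' t * t / \<phi>' t + 1 | t. t > 0} \<and>
     bdd_above {\<phi>'' t * t / \<phi>' t + 1 | t. t > 0} \<and>
     1 < p_minus \<phi>' \<phi>''"

definition clamp :: "real \<Rightarrow> real \<Rightarrow> real \<Rightarrow> real" where
  "clamp dm dp t = max dm (min t dp)"

definition trunc_deriv :: "(real \<Rightarrow> real) \<Rightarrow> real \<Rightarrow> real \<Rightarrow> real \<Rightarrow> real" where
  "trunc_deriv \<phi>' dm dp t = \<phi>' (clamp dm dp t) / clamp dm dp t * t"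

definition trunc_N :: "(real \<Rightarrow> real) \<Rightarrow> real \<Rightarrow> real \<Rightarrow> real \<Rightarrow> real" where
  "trunc_N \<phi>' dm dp t = integral {0..t} (trunc_deriv \<phi>' dm dp)"

definition Lp_space :: "real \<Rightarrow> 'a::euclidean_space set \<Rightarrow> ('a \<Rightarrow> real) set" where
  "Lp_space p \<Omega> = {v. v \<in> borel_measurable (lebesgue_on \<Omega>) \<and>
      (\<integral>\<^sup>+ x. ennreal (\<bar>v x\<bar> powr p) \<partial>(lebesgue_on \<Omega>)) < \<infinity>}"

definition Lp_norm :: "real \<Rightarrow> 'a::euclidean_space set \<Rightarrow> ('a \<Rightarrow> real) \<Rightarrow> real" where
  "Lp_norm p \<Omega> v = (enn2real (\<integral>\<^sup>+ x. ennreal (\<bar>v x\<bar> powr p) \<partial>(lebesgue_on \<Omega>))) powr (1 / p)"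

definition orlicz_modular :: "(real \<Rightarrow> real) \<Rightarrow> 'a::euclidean_space set \<Rightarrow> ('a \<Rightarrow> real) \<Rightarrow> real \<Rightarrow> ennreal" where
  "orlicz_modular \<Phi> \<Omega> v r = (\<integral>\<^sup>+ x. ennreal (\<Phi> (\<bar>v x\<bar> / r)) \<partial>(lebesgue_on \<Omega>))"

definition Orlicz_space :: "(real \<Rightarrow> real) \<Rightarrow> 'a::euclidean_space set \<Rightarrow> ('a \<Rightarrow> real) set" where
  "Orlicz_space \<Phi> \<Omega> = {v. v \<in> borel_measurable (lebesgue_on \<Omega>) \<and>
      (\<exists>r>0. orlicz_modular \<Phi> \<Omega> v r \<le> 1)}"

definition lux_norm :: "(real \<Rightarrow> real) \<Rightarrow> 'a::euclidean_space set \<Rightarrow> ('a \<Rightarrow> real) \<Rightarrow> real" where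
  "lux_norm \<Phi> \<Omega> v = Inf {r. r > 0 \<and> orlicz_modular \<Phi> \<Omega> v r \<le> 1}"

definition inter3_norm :: "real \<Rightarrow> real \<Rightarrow> 'a::euclidean_space set \<Rightarrow> ('a \<Rightarrow> real) \<Rightarrow> real" where
  "inter3_norm p q \<Omega> v = max (Lp_norm p \<Omega> v) (max (Lp_norm q \<Omega> v) (Lp_norm 2 \<Omega> v))"

definition sum3_decomps :: "real \<Rightarrow> real \<Rightarrow> 'a::euclidean_space set \<Rightarrow> ('a \<Rightarrow> real) \<Rightarrow>
    (('a \<Rightarrow> real) \<times> ('a \<Rightarrow> real) \<times> ('a \<Rightarrow> real)) set" where
  "sum3_decomps p q \<Omega> v = {(f, g, h). f \<in> Lp_space p \<Omega> \<and> g \<in> Lp_space q \<Omega> \<and> h \<in> Lp_space 2 \<Omega> \<and>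
      (\<forall>x\<in>\<Omega>. v x = f x + g x + h x)}"

definition sum3_space :: "real \<Rightarrow> real \<Rightarrow> 'a::euclidean_space set \<Rightarrow> ('a \<Rightarrow> real) set" where
  "sum3_space p q \<Omega> = {v. sum3_decomps p q \<Omega> v \<noteq> {}}"

definition sum3_norm :: "real \<Rightarrow> real \<Rightarrow> 'a::euclidean_space set \<Rightarrow> ('a \<Rightarrow> real) \<Rightarrow> real" where
  "sum3_norm p q \<Omega> v = Inf ((\<lambda>(f, g, h). Lp_norm p \<Omega> f + Lp_norm q \<Omega> g + Lp_norm 2 \<Omega> h)
      ` sum3_decomps p q \<Omega> v)"

end

theory Submission
  imports Defs
begin

lemma deriv_at_from_within:
  assumes "(f has_real_derivative D) (at t within {0..})" "t > 0"
  shows "(f has_real_derivative D) (at t)"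
proof -
  have "(f has_real_derivative D) (at t within {0<..})"
    using assms(1) by (rule DERIV_subset) (auto simp del: greaterThan_iff atLeast_iff intro: less_imp_le)
  moreover have "at t within {0<..} = at t"
    by (rule at_within_open) (use assms(2) in auto)
  ultimately show ?thesis by simp
qed

lemma phi_props:
  assumes uc: "uniformly_convex \<phi> \<phi>' \<phi>''"
  defines "p \<equiv> p_minus \<phi>' \<phi>''" and "q \<equiv> p_plus \<phi>' \<phi>''"
  shows "1 < p" "p \<le> q" "\<And>t. t > 0 \<Longrightarrow> \<phi>' t > 0" "continuous_on {0..} \<phi>'"
    "\<And>t. t > 0 \<Longrightarrow> p \<le> \<phi>'' t * t / \<phi>' t + 1"
    "\<And>t. t > 0 \<Longrightarrow> \<phi>'' t * t / \<phi>' t + 1 \<le> q"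
proof -
  let ?S = "{\<phi>'' t * t / \<phi>' t + 1 | t. t > 0}"
  have N: "N_function \<phi>" and dphi: "\<And>t. t \<ge> 0 \<Longrightarrow> (\<phi> has_real_derivative \<phi>' t) (at t within {0..})"
    and cont: "continuous_on {0..} \<phi>'" and d2: "\<And>t. t > 0 \<Longrightarrow> (\<phi>' has_real_derivative \<phi>'' t) (at t)"
    and bb: "bdd_below ?S" and ba: "bdd_above ?S" and p1: "1 < p"
    using uc unfolding uniformly_convex_def p_def by auto
  show "1 < p" by (fact p1)
  show "continuous_on {0..} \<phi>'" by (fact cont)
  have lo: "p \<le> \<phi>'' t * t / \<phi>' t + 1" if "t > 0" for t
    unfolding p_def p_minus_def by (rule cInf_lower) (use that bb in auto)
  have hi: "\<phi>'' t * t / \<phi>' t + 1 \<le> q" if "t > 0" for t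
    unfolding q_def p_plus_def by (rule cSup_upper) (use that ba in auto)
  show "\<And>t. t > 0 \<Longrightarrow> p \<le> \<phi>'' t * t / \<phi>' t + 1" using lo by auto
  show "\<And>t. t > 0 \<Longrightarrow> \<phi>'' t * t / \<phi>' t + 1 \<le> q" using hi by auto
  show "p \<le> q" using lo[of 1] hi[of 1] by auto
  have nz: "\<phi>' t \<noteq> 0" if "t > 0" for t
    using lo[OF that] p1 by auto
  have ivt: "\<not> (\<phi>' a < 0 \<and> \<phi>' b > 0) \<and> \<not> (\<phi>' a > 0 \<and> \<phi>' b < 0)" if ab: "0 < a" "a \<le> b" for a b
  proof -
    have c: "continuous_on {a..b} \<phi>'" by (rule continuous_on_subset[OF cont]) (use ab in auto)
    show ?thesis
    proof (intro conjI notI)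
      assume "\<phi>' a < 0 \<and> \<phi>' b > 0"
      then obtain x where "a \<le> x" "x \<le> b" "\<phi>' x = 0" using IVT'[of \<phi>' a 0 b] c ab by auto
      then show False using nz[of x] ab by auto
    next
      assume "\<phi>' a > 0 \<and> \<phi>' b < 0"
      then obtain x where "a \<le> x" "x \<le> b" "\<phi>' x = 0" using IVT2'[of \<phi>' b 0 a] c ab by auto
      then show False using nz[of x] ab by auto
    qed
  qed
  have pos1: "\<phi>' 1 > 0"
  proof (rule ccontr)
    assume "\<not> \<phi>' 1 > 0"
    then have n1: "\<phi>' 1 < 0" using nz[of 1] by auto
    have neg: "\<phi>' x < 0" if "0 < x" "x < 1" for x
    proof -
      have "\<phi>' x \<noteq> 0" using nz[of x] that by simp
      moreover have "\<not> (\<phi>' x > 0 \<and> \<phi>' 1 < 0)" using ivt[of x 1] that by simp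
      ultimately show ?thesis using n1 by linarith
    qed
    have contphi: "continuous_on {0..1} \<phi>"
      unfolding continuous_on_eq_continuous_within
    proof (intro ballI)
      fix x :: real assume "x \<in> {0..1}"
      then have "continuous (at x within {0..}) \<phi>"
        using dphi DERIV_continuous by force
      then show "continuous (at x within {0..1}) \<phi>"
        by (rule continuous_within_subset) auto
    qed
    have "\<phi> 0 > \<phi> 1"
    proof (rule DERIV_neg_imp_decreasing_open[OF _ _ contphi])
      fix x :: real assume x: "0 < x" "x < 1"
      have "(\<phi> has_real_derivative \<phi>' x) (at x)"
        by (rule deriv_at_from_within[OF dphi]) (use x in auto)
      then show "\<exists>y. (\<phi> has_real_derivative y) (at x) \<and> y < 0" using neg[OF x] by blast
    qed simp
    moreover obtain \<psi> where psi: "\<psi> 0 = 0" "\<forall>t>0. \<psi> t > 0" "\<forall>t\<ge>0. \<phi> t = integral {0..t} \<psi>"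
      using N unfolding N_function_def by (elim exE conjE) (rule that, assumption+)
    have "\<phi> 0 = integral {0..0} \<psi>" using psi(3) by simp
    then have "\<phi> 0 = 0" by simp
    moreover have "\<phi> 1 \<ge> 0"
    proof (cases "\<psi> integrable_on {0..1}")
      case True
      have "0 \<le> integral {0..1} \<psi>" by (rule integral_nonneg[OF True]) (use psi(1,2) in \<open>auto simp: le_less\<close>)
      then show ?thesis using psi(3) by simp
    next
      case False
      then show ?thesis using psi(3) not_integrable_integral[OF False] by simp
    qed
    ultimately show False by simp
  qed
  show "\<And>t. t > 0 \<Longrightarrow> \<phi>' t > 0"
  proof -
    fix t :: real assume t: "t > 0"
    show "\<phi>' t > 0"
    proof (rule ccontr)
      assume "\<not> \<phi>' t > 0"
      then have "\<phi>' t < 0" using nz[OF t] by auto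
      show False
      proof (cases "t \<le> 1")
        case True
        then show False using ivt[of t 1] pos1 t \<open>\<phi>' t < 0\<close> by blast
      next
        case False
        then show False using ivt[of 1 t] pos1 t \<open>\<phi>' t < 0\<close> by simp
      qed
    qed
  qed
qed


lemma log_incr:
  fixes f f' :: "real \<Rightarrow> real"
  assumes pos: "\<And>x. x > 0 \<Longrightarrow> f x > 0"
    and d: "\<And>x. x > 0 \<Longrightarrow> (f has_real_derivative f' x) (at x)"
    and e: "\<And>x. x > 0 \<Longrightarrow> e \<le> f' x * x / f x"
    and ab: "0 < a" "a \<le> b"
  shows "ln (f a) - e * ln a \<le> ln (f b) - e * ln b"
proof (rule DERIV_nonneg_imp_nondecreasing[OF ab(2)])
  fix x assume x: "a \<le> x" "x \<le> b"
  then have x0: "x > 0" using ab by simp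
  have "((\<lambda>x. ln (f x) - e * ln x) has_real_derivative (f' x / f x - e / x)) (at x)"
    using x0 pos[OF x0] d[OF x0]
    by (auto intro!: derivative_eq_intros simp: field_simps)
  moreover have "f' x / f x - e / x \<ge> 0"
  proof -
    have "f' x / f x - e / x = (f' x * x / f x - e) / x" using x0 by (simp add: field_simps)
    also have "\<dots> \<ge> 0" using e[OF x0] x0 by simp
    finally show ?thesis .
  qed
  ultimately show "\<exists>y. ((\<lambda>x. ln (f x) - e * ln x) has_real_derivative y) (at x) \<and> 0 \<le> y" by blast
qed

lemma log_decr:
  fixes f f' :: "real \<Rightarrow> real"
  assumes pos: "\<And>x. x > 0 \<Longrightarrow> f x > 0"
    and d: "\<And>x. x > 0 \<Longrightarrow> (f has_real_derivative f' x) (at x)"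
    and e: "\<And>x. x > 0 \<Longrightarrow> f' x * x / f x \<le> e"
    and ab: "0 < a" "a \<le> b"
  shows "ln (f b) - e * ln b \<le> ln (f a) - e * ln a"
proof -
  have "ln (f a) - (-e) * ln a \<le> ln (f b) - (-e) * ln b" if "False" using that by simp
  have "- (ln (f a) - e * ln a) \<le> - (ln (f b) - e * ln b)"
  proof (rule DERIV_nonneg_imp_nondecreasing[OF ab(2), of "\<lambda>x. - (ln (f x) - e * ln x)"])
    fix x assume x: "a \<le> x" "x \<le> b"
    then have x0: "x > 0" using ab by simp
    have "((\<lambda>x. - (ln (f x) - e * ln x)) has_real_derivative (- (f' x / f x - e / x))) (at x)"
      using x0 pos[OF x0] d[OF x0]
      by (auto intro!: derivative_eq_intros simp: field_simps)
    moreover have "- (f' x / f x - e / x) \<ge> 0"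
    proof -
      have "f' x / f x - e / x = (f' x * x / f x - e) / x" using x0 by (simp add: field_simps)
      also have "\<dots> \<le> 0" using e[OF x0] x0 by (simp add: divide_nonpos_pos)
      finally show ?thesis by simp
    qed
    ultimately show "\<exists>y. ((\<lambda>x. - (ln (f x) - e * ln x)) has_real_derivative y) (at x) \<and> 0 \<le> y" by blast
  qed
  then show ?thesis by simp
qed

lemma exp_form:
  fixes u v e s :: real
  assumes "ln u - e * ln s \<le> ln v" "u > 0" "v > 0" "s > 0"
  shows "u \<le> v * s powr e"
proof -
  have "ln u \<le> ln v + e * ln s" using assms(1) by linarith
  then have "exp (ln u) \<le> exp (ln v + e * ln s)" by simp
  then show ?thesis using assms by (simp add: exp_add powr_def mult.commute)
qed

lemma exp_form2:
  fixes u v e s :: real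
  assumes "ln v \<le> ln u - e * ln s" "u > 0" "v > 0" "s > 0"
  shows "v * s powr e \<le> u"
proof -
  have "ln v + e * ln s \<le> ln u" using assms(1) by linarith
  then have "exp (ln v + e * ln s) \<le> exp (ln u)" by simp
  then show ?thesis using assms by (simp add: exp_add powr_def mult.commute)
qed

lemma phi_pow_bounds:
  assumes uc: "uniformly_convex \<phi> \<phi>' \<phi>''"
  defines "p \<equiv> p_minus \<phi>' \<phi>''" and "q \<equiv> p_plus \<phi>' \<phi>''"
  shows "\<And>s. 0 < s \<Longrightarrow> s \<le> 1 \<Longrightarrow> \<phi>' 1 * s powr (q - 1) \<le> \<phi>' s \<and> \<phi>' s \<le> \<phi>' 1 * s powr (p - 1)"
    and "\<And>s. 1 \<le> s \<Longrightarrow> \<phi>' 1 * s powr (p - 1) \<le> \<phi>' s \<and> \<phi>' s \<le> \<phi>' 1 * s powr (q - 1)"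
proof -
  note P = phi_props[OF uc, folded p_def q_def]
  have d: "\<And>x. x > 0 \<Longrightarrow> (\<phi>' has_real_derivative \<phi>'' x) (at x)"
    using uc unfolding uniformly_convex_def by blast
  have pos: "\<And>x. x > 0 \<Longrightarrow> \<phi>' x > 0" by (rule P(3))
  have ep: "\<And>x. x > 0 \<Longrightarrow> p - 1 \<le> \<phi>'' x * x / \<phi>' x" using P(5) by fastforce
  have eq: "\<And>x. x > 0 \<Longrightarrow> \<phi>'' x * x / \<phi>' x \<le> q - 1" using P(6) by fastforce
  have p1: "\<phi>' 1 > 0" using pos by simp
  {
    fix s :: real assume s: "0 < s" "s \<le> 1"
    have a: "ln (\<phi>' s) - (p - 1) * ln s \<le> ln (\<phi>' 1) - (p - 1) * ln 1"
      by (rule log_incr[OF pos d ep s])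
    have b: "ln (\<phi>' 1) - (q - 1) * ln 1 \<le> ln (\<phi>' s) - (q - 1) * ln s"
      by (rule log_decr[OF pos d eq s])
    show "\<phi>' 1 * s powr (q - 1) \<le> \<phi>' s \<and> \<phi>' s \<le> \<phi>' 1 * s powr (p - 1)"
      using exp_form[of "\<phi>' s" "p - 1" s "\<phi>' 1"] exp_form2[of "\<phi>' 1" "\<phi>' s" "q - 1" s] a b s pos p1
      by simp
  }
  {
    fix s :: real assume s: "1 \<le> s"
    have a: "ln (\<phi>' 1) - (p - 1) * ln 1 \<le> ln (\<phi>' s) - (p - 1) * ln s"
      by (rule log_incr[OF pos d ep zero_less_one s])
    have b: "ln (\<phi>' s) - (q - 1) * ln s \<le> ln (\<phi>' 1) - (q - 1) * ln 1"
      by (rule log_decr[OF pos d eq zero_less_one s])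
    have s0: "s > 0" using s by simp
    show "\<phi>' 1 * s powr (p - 1) \<le> \<phi>' s \<and> \<phi>' s \<le> \<phi>' 1 * s powr (q - 1)"
      using exp_form[of "\<phi>' s" "q - 1" s "\<phi>' 1"] exp_form2[of "\<phi>' 1" "\<phi>' s" "p - 1" s] a b s0 pos p1
      by simp
  }
qed


lemma between_pow:
  fixes s x e :: real
  assumes s: "0 < s" and bx: "(s \<le> x \<and> x \<le> 1) \<or> (1 \<le> x \<and> x \<le> s)"
  shows "min 1 (s powr e) \<le> x powr e \<and> x powr e \<le> max 1 (s powr e)"
proof (cases "e \<ge> 0")
  case True
  show ?thesis
  proof (cases "s \<le> x \<and> x \<le> 1")
    case True
    then have "s powr e \<le> x powr e" "x powr e \<le> 1 powr e"
      using powr_mono2[OF \<open>e \<ge> 0\<close>, of s x] powr_mono2[OF \<open>e \<ge> 0\<close>, of x 1] s by auto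
    then show ?thesis by simp
  next
    case False
    then have "1 \<le> x" "x \<le> s" using bx by auto
    then have "1 powr e \<le> x powr e" "x powr e \<le> s powr e"
      using powr_mono2[OF \<open>e \<ge> 0\<close>, of 1 x] powr_mono2[OF \<open>e \<ge> 0\<close>, of x s] by auto
    then show ?thesis by simp
  qed
next
  case False
  then have e: "e \<le> 0" by simp
  show ?thesis
  proof (cases "s \<le> x \<and> x \<le> 1")
    case True
    then have "s powr e \<ge> x powr e" "x powr e \<ge> 1 powr e"
      using powr_mono2'[OF e, of s x] powr_mono2'[OF e, of x 1] s by auto
    then show ?thesis by simp
  next
    case False
    then have "1 \<le> x" "x \<le> s" using bx by auto
    then have "1 powr e \<ge> x powr e" "x powr e \<ge> s powr e"
      using powr_mono2'[OF e, of 1 x] powr_mono2'[OF e, of x s] by auto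
    then show ?thesis by simp
  qed
qed

lemma ratio_bounds:
  assumes uc: "uniformly_convex \<phi> \<phi>' \<phi>''"
  defines "p \<equiv> p_minus \<phi>' \<phi>''" and "q \<equiv> p_plus \<phi>' \<phi>''"
  assumes x: "0 < x"
  shows "x \<le> 1 \<Longrightarrow> \<phi>' 1 * x powr (q - 2) \<le> \<phi>' x / x \<and> \<phi>' x / x \<le> \<phi>' 1 * x powr (p - 2)"
    and "1 \<le> x \<Longrightarrow> \<phi>' 1 * x powr (p - 2) \<le> \<phi>' x / x \<and> \<phi>' x / x \<le> \<phi>' 1 * x powr (q - 2)"
proof -
  note B = phi_pow_bounds[OF uc, folded p_def q_def]
  have dv: "x powr (e - 2) = x powr (e - 1) / x" for e
  proof -
    have "x powr (e - 2) = x powr ((e - 1) - 1)" by simp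
    also have "\<dots> = x powr (e - 1) / x powr 1" by (rule powr_diff)
    also have "\<dots> = x powr (e - 1) / x" using x by simp
    finally show ?thesis .
  qed
  have dv': "c * x powr (e - 2) = c * x powr (e - 1) / x" for c e
    using dv by simp
  show "x \<le> 1 \<Longrightarrow> \<phi>' 1 * x powr (q - 2) \<le> \<phi>' x / x \<and> \<phi>' x / x \<le> \<phi>' 1 * x powr (p - 2)"
    using B(1)[OF x] x unfolding dv' by (auto simp: divide_right_mono)
  show "1 \<le> x \<Longrightarrow> \<phi>' 1 * x powr (p - 2) \<le> \<phi>' x / x \<and> \<phi>' x / x \<le> \<phi>' 1 * x powr (q - 2)"
    using B(2) x unfolding dv' by (auto simp: divide_right_mono)
qed

lemma clamp_ratio_bounds:
  assumes uc: "uniformly_convex \<phi> \<phi>' \<phi>''"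
  defines "p \<equiv> p_minus \<phi>' \<phi>''" and "q \<equiv> p_plus \<phi>' \<phi>''"
  assumes d: "0 < dm" "dm \<le> 1" "1 \<le> dp" and s: "0 < s"
  shows "\<phi>' 1 * min 1 (min (s powr (p - 2)) (s powr (q - 2))) \<le> \<phi>' (clamp dm dp s) / clamp dm dp s
     \<and> \<phi>' (clamp dm dp s) / clamp dm dp s \<le> \<phi>' 1 * max 1 (max (s powr (p - 2)) (s powr (q - 2)))"
proof -
  note R = ratio_bounds[OF uc, folded p_def q_def]
  have a: "\<phi>' 1 > 0" using phi_props(3)[OF uc] by simp
  consider "s < dm" | "dm \<le> s" "s \<le> dp" | "dp < s" by linarith
  then show ?thesis
  proof cases
    case 1
    then have c: "clamp dm dp s = dm" using d unfolding clamp_def by auto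
    have r: "\<phi>' 1 * dm powr (q - 2) \<le> \<phi>' dm / dm \<and> \<phi>' dm / dm \<le> \<phi>' 1 * dm powr (p - 2)"
      using R(1)[of dm] d by auto
    have b1: "min 1 (s powr (q - 2)) \<le> dm powr (q - 2)" and b2: "dm powr (p - 2) \<le> max 1 (s powr (p - 2))"
      using between_pow[of s dm] s 1 d by auto
    have "\<phi>' 1 * min 1 (min (s powr (p - 2)) (s powr (q - 2))) \<le> \<phi>' 1 * dm powr (q - 2)"
      using b1 a by (intro mult_left_mono) auto
    moreover have "\<phi>' 1 * dm powr (p - 2) \<le> \<phi>' 1 * max 1 (max (s powr (p - 2)) (s powr (q - 2)))"
      using b2 a by (intro mult_left_mono) auto
    ultimately show ?thesis using r unfolding c by linarith
  next
    case 2
    then have c: "clamp dm dp s = s" using d unfolding clamp_def by auto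
    show ?thesis
    proof (cases "s \<le> 1")
      case True
      have r: "\<phi>' 1 * s powr (q - 2) \<le> \<phi>' s / s \<and> \<phi>' s / s \<le> \<phi>' 1 * s powr (p - 2)"
        using R(1)[OF s True] .
      have "\<phi>' 1 * min 1 (min (s powr (p - 2)) (s powr (q - 2))) \<le> \<phi>' 1 * s powr (q - 2)"
        using a by (intro mult_left_mono) auto
      moreover have "\<phi>' 1 * s powr (p - 2) \<le> \<phi>' 1 * max 1 (max (s powr (p - 2)) (s powr (q - 2)))"
        using a by (intro mult_left_mono) auto
      ultimately show ?thesis using r unfolding c by linarith
    next
      case False
      have r: "\<phi>' 1 * s powr (p - 2) \<le> \<phi>' s / s \<and> \<phi>' s / s \<le> \<phi>' 1 * s powr (q - 2)"
        using R(2)[OF s] False by auto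
      have "\<phi>' 1 * min 1 (min (s powr (p - 2)) (s powr (q - 2))) \<le> \<phi>' 1 * s powr (p - 2)"
        using a by (intro mult_left_mono) auto
      moreover have "\<phi>' 1 * s powr (q - 2) \<le> \<phi>' 1 * max 1 (max (s powr (p - 2)) (s powr (q - 2)))"
        using a by (intro mult_left_mono) auto
      ultimately show ?thesis using r unfolding c by linarith
    qed
  next
    case 3
    then have c: "clamp dm dp s = dp" using d unfolding clamp_def by auto
    have r: "\<phi>' 1 * dp powr (p - 2) \<le> \<phi>' dp / dp \<and> \<phi>' dp / dp \<le> \<phi>' 1 * dp powr (q - 2)"
      using R(2)[of dp] d by auto
    have b1: "min 1 (s powr (p - 2)) \<le> dp powr (p - 2)" and b2: "dp powr (q - 2) \<le> max 1 (s powr (q - 2))"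
      using between_pow[of s dp] s 3 d by auto
    have "\<phi>' 1 * min 1 (min (s powr (p - 2)) (s powr (q - 2))) \<le> \<phi>' 1 * dp powr (p - 2)"
      using b1 a by (intro mult_left_mono) auto
    moreover have "\<phi>' 1 * dp powr (q - 2) \<le> \<phi>' 1 * max 1 (max (s powr (p - 2)) (s powr (q - 2)))"
      using b2 a by (intro mult_left_mono) auto
    ultimately show ?thesis using r unfolding c by linarith
  qed
qed


lemma trd_bounds:
  assumes uc: "uniformly_convex \<phi> \<phi>' \<phi>''"
  defines "p \<equiv> p_minus \<phi>' \<phi>''" and "q \<equiv> p_plus \<phi>' \<phi>''"
  assumes d: "0 < dm" "dm \<le> 1" "1 \<le> dp" and s: "0 \<le> s"
  shows "\<phi>' 1 * min s (min (s powr (p - 1)) (s powr (q - 1))) \<le> trunc_deriv \<phi>' dm dp s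
     \<and> trunc_deriv \<phi>' dm dp s \<le> \<phi>' 1 * (s + s powr (p - 1) + s powr (q - 1))"
proof (cases "s = 0")
  case True
  then show ?thesis by (simp add: trunc_deriv_def)
next
  case False
  then have s0: "s > 0" using s by simp
  have a: "\<phi>' 1 > 0" using phi_props(3)[OF uc] by simp
  let ?r = "\<phi>' (clamp dm dp s) / clamp dm dp s"
  have R: "\<phi>' 1 * min 1 (min (s powr (p - 2)) (s powr (q - 2))) \<le> ?r
     \<and> ?r \<le> \<phi>' 1 * max 1 (max (s powr (p - 2)) (s powr (q - 2)))"
    using clamp_ratio_bounds[OF uc d s0] unfolding p_def q_def by simp
  have t: "trunc_deriv \<phi>' dm dp s = s * ?r" by (simp add: trunc_deriv_def)
  have pb: "s * s powr (e - 2) = s powr (e - 1)" for e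
    using powr_mult_base[of s "e - 2"] s by simp
  have lo: "s * (\<phi>' 1 * min 1 (min (s powr (p - 2)) (s powr (q - 2)))) \<le> s * ?r"
    using R s by (intro mult_left_mono) auto
  have hi: "s * ?r \<le> s * (\<phi>' 1 * max 1 (max (s powr (p - 2)) (s powr (q - 2))))"
    using R s by (intro mult_left_mono) auto
  have e1: "s * (\<phi>' 1 * min 1 (min (s powr (p - 2)) (s powr (q - 2))))
      = \<phi>' 1 * min s (min (s powr (p - 1)) (s powr (q - 1)))"
  proof -
    have "s * (\<phi>' 1 * min 1 (min (s powr (p - 2)) (s powr (q - 2)))) = \<phi>' 1 * (s * min 1 (min (s powr (p - 2)) (s powr (q - 2))))"
      by (simp only: mult.left_commute)
    also have "\<dots> = \<phi>' 1 * min s (min (s * s powr (p - 2)) (s * s powr (q - 2)))"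
      using s by (simp add: min_mult_distrib_left)
    also have "\<dots> = \<phi>' 1 * min s (min (s powr (p - 1)) (s powr (q - 1)))" by (simp only: pb)
    finally show ?thesis .
  qed
  have e2: "s * (\<phi>' 1 * max 1 (max (s powr (p - 2)) (s powr (q - 2))))
      = \<phi>' 1 * max s (max (s powr (p - 1)) (s powr (q - 1)))"
  proof -
    have "s * (\<phi>' 1 * max 1 (max (s powr (p - 2)) (s powr (q - 2)))) = \<phi>' 1 * (s * max 1 (max (s powr (p - 2)) (s powr (q - 2))))"
      by (simp only: mult.left_commute)
    also have "\<dots> = \<phi>' 1 * max s (max (s * s powr (p - 2)) (s * s powr (q - 2)))"
      using s by (simp add: max_mult_distrib_left)
    also have "\<dots> = \<phi>' 1 * max s (max (s powr (p - 1)) (s powr (q - 1)))" by (simp only: pb)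
    finally show ?thesis .
  qed
  have m: "max s (max (s powr (p - 1)) (s powr (q - 1))) \<le> s + s powr (p - 1) + s powr (q - 1)"
    using s by simp
  have "\<phi>' 1 * max s (max (s powr (p - 1)) (s powr (q - 1))) \<le> \<phi>' 1 * (s + s powr (p - 1) + s powr (q - 1))"
    using m a by (intro mult_left_mono) auto
  then show ?thesis using lo hi e1 e2 t by linarith
qed

lemma trd_cont:
  assumes uc: "uniformly_convex \<phi> \<phi>' \<phi>''" and d: "0 < dm" "dm \<le> dp"
  shows "continuous_on UNIV (trunc_deriv \<phi>' dm dp)"
proof -
  have cont: "continuous_on {0..} \<phi>'" by (rule phi_props(4)[OF uc])
  have cc: "continuous_on UNIV (clamp dm dp)" unfolding clamp_def
    by (intro continuous_intros)
  have rng: "clamp dm dp x \<ge> dm" for x unfolding clamp_def by simp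
  have c1: "continuous_on UNIV (\<lambda>x. \<phi>' (clamp dm dp x))"
    by (rule continuous_on_compose2[OF cont cc]) (use rng d in \<open>auto intro: order.trans[OF less_imp_le]\<close>)
  have nz: "clamp dm dp x \<noteq> 0" for x using rng[of x] d by linarith
  have "continuous_on UNIV (\<lambda>x. \<phi>' (clamp dm dp x) / clamp dm dp x * x)"
    using nz by (intro continuous_intros c1 cc) auto
  then show ?thesis unfolding trunc_deriv_def[abs_def] .
qed


lemma pb2: "0 \<le> (t::real) \<Longrightarrow> t * t powr (e - 1) = t powr e"
  using powr_mult_base[of t "e - 1"] by simp

lemma half_pow: 
  fixes t e q :: real
  assumes "0 \<le> t" "e \<le> q"
  shows "t powr e / 2 powr q \<le> (t / 2) powr e"
proof -
  have "2 powr e \<le> 2 powr q" using assms(2) by (rule powr_mono) simp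
  then have "t powr e / 2 powr q \<le> t powr e / 2 powr e"
    by (intro divide_left_mono) auto
  also have "\<dots> = (t / 2) powr e" by (simp add: powr_divide)
  finally show ?thesis .
qed

lemma truncN_props:
  assumes uc: "uniformly_convex \<phi> \<phi>' \<phi>''"
  defines "p \<equiv> p_minus \<phi>' \<phi>''" and "q \<equiv> p_plus \<phi>' \<phi>''"
  assumes d: "0 < dm" "dm \<le> 1" "1 \<le> dp"
  shows "\<And>t. 0 \<le> t \<Longrightarrow> trunc_N \<phi>' dm dp t \<le> \<phi>' 1 * (t powr 2 + t powr p + t powr q)"
    and "\<And>t. 0 \<le> t \<Longrightarrow> \<phi>' 1 / (2 * 2 powr q) * min (t powr 2) (min (t powr p) (t powr q)) \<le> trunc_N \<phi>' dm dp t"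
    and "\<And>t. 0 \<le> trunc_N \<phi>' dm dp t"
    and "mono (trunc_N \<phi>' dm dp)"
proof -
  note P = phi_props[OF uc, folded p_def q_def]
  have p1: "1 < p" and pq: "p \<le> q" using P by auto
  have a: "\<phi>' 1 > 0" using P(3) by simp
  define f where "f = trunc_deriv \<phi>' dm dp"
  define m3 where "m3 s = min s (min (s powr (p - 1)) (s powr (q - 1)))" for s :: real
  define M3 where "M3 s = s + s powr (p - 1) + s powr (q - 1)" for s :: real
  have TN: "trunc_N \<phi>' dm dp t = integral {0..t} f" for t unfolding trunc_N_def f_def by simp
  have fb: "\<phi>' 1 * m3 s \<le> f s \<and> f s \<le> \<phi>' 1 * M3 s" if "0 \<le> s" for s
    using trd_bounds[OF uc d that] unfolding f_def m3_def M3_def p_def q_def by simp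
  have fint: "f integrable_on {x..y}" for x y
  proof -
    have "continuous_on UNIV f" unfolding f_def by (rule trd_cont[OF uc]) (use d in auto)
    then show ?thesis by (rule integrable_continuous_interval[OF continuous_on_subset]) auto
  qed
  have m3_nn: "0 \<le> m3 s" if "0 \<le> s" for s unfolding m3_def using that by simp
  have f_nn: "0 \<le> f s" if "0 \<le> s" for s using fb[OF that] m3_nn[OF that] a
    by (meson mult_nonneg_nonneg less_imp_le order.trans)
  have m3_mono: "m3 s \<le> m3 t" if "0 \<le> s" "s \<le> t" for s t
  proof -
    have "s powr (p - 1) \<le> t powr (p - 1)" "s powr (q - 1) \<le> t powr (q - 1)"
      using that p1 pq by (auto intro!: powr_mono2)
    then show ?thesis unfolding m3_def using that by linarith
  qed
  have M3_mono: "M3 s \<le> M3 t" if "0 \<le> s" "s \<le> t" for s t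
  proof -
    have "s powr (p - 1) \<le> t powr (p - 1)" "s powr (q - 1) \<le> t powr (q - 1)"
      using that p1 pq by (auto intro!: powr_mono2)
    then show ?thesis unfolding M3_def using that by linarith
  qed
  show up: "trunc_N \<phi>' dm dp t \<le> \<phi>' 1 * (t powr 2 + t powr p + t powr q)" if t: "0 \<le> t" for t
  proof -
    have "integral {0..t} f \<le> integral {0..t} (\<lambda>_. \<phi>' 1 * M3 t)"
    proof (rule integral_le[OF fint])
      fix s assume "s \<in> {0..t}"
      then have "f s \<le> \<phi>' 1 * M3 s" "M3 s \<le> M3 t" using fb M3_mono by auto
      then show "f s \<le> \<phi>' 1 * M3 t" using a by (meson mult_left_mono less_imp_le order.trans)
    qed (rule integrable_const_ivl)
    also have "\<dots> = t * (\<phi>' 1 * M3 t)" using t by simp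
    also have "\<dots> = \<phi>' 1 * (t * t powr (2 - 1) + t * t powr (p - 1) + t * t powr (q - 1))"
      using t unfolding M3_def by (simp add: algebra_simps)
    also have "\<dots> = \<phi>' 1 * (t powr 2 + t powr p + t powr q)" using t by (simp only: pb2)
    finally show ?thesis unfolding TN .
  qed
  show lo: "\<phi>' 1 / (2 * 2 powr q) * min (t powr 2) (min (t powr p) (t powr q)) \<le> trunc_N \<phi>' dm dp t"
    if t: "0 \<le> t" for t
  proof -
    have comb: "integral {0..t/2} f + integral {t/2..t} f = integral {0..t} f"
      by (rule Henstock_Kurzweil_Integration.integral_combine[OF _ _ fint]) (use t in auto)
    have i1: "0 \<le> integral {0..t/2} f"
      by (rule integral_nonneg[OF fint]) (use f_nn in auto)
    have i2: "integral {t/2..t} (\<lambda>_. \<phi>' 1 * m3 (t/2)) \<le> integral {t/2..t} f"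
    proof (rule integral_le[OF _ fint])
      fix s assume s: "s \<in> {t/2..t}"
      then have "\<phi>' 1 * m3 s \<le> f s" "m3 (t/2) \<le> m3 s" using fb m3_mono t by auto
      then show "\<phi>' 1 * m3 (t/2) \<le> f s" using a by (meson mult_left_mono less_imp_le order.trans)
    qed (rule integrable_const_ivl)
    have i3: "integral {t/2..t} (\<lambda>_. \<phi>' 1 * m3 (t/2)) = t / 2 * (\<phi>' 1 * m3 (t/2))" using t by simp
    have K: "2 powr q > 0" by simp
    have hm: "m3 t / 2 powr q \<le> m3 (t/2)"
    proof -
      have e1: "t / 2 powr q \<le> t / 2"
        using half_pow[OF t, of 1 q] p1 pq t by simp
      have e2: "t powr (p - 1) / 2 powr q \<le> (t/2) powr (p - 1)" by (rule half_pow) (use t pq in auto)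
      have e3: "t powr (q - 1) / 2 powr q \<le> (t/2) powr (q - 1)" by (rule half_pow) (use t pq in auto)
      have "m3 t / 2 powr q \<le> t / 2 powr q" "m3 t / 2 powr q \<le> t powr (p - 1) / 2 powr q"
        "m3 t / 2 powr q \<le> t powr (q - 1) / 2 powr q"
        unfolding m3_def using K by (auto intro!: divide_right_mono)
      then show ?thesis unfolding m3_def[of "t/2"] using e1 e2 e3 by linarith
    qed
    have tm: "t * m3 t = min (t powr 2) (min (t powr p) (t powr q))"
    proof -
      have "t * m3 t = min (t * t powr (2 - 1)) (min (t * t powr (p - 1)) (t * t powr (q - 1)))"
        unfolding m3_def using t by (simp add: min_mult_distrib_left)
      also have "\<dots> = min (t powr 2) (min (t powr p) (t powr q))" using t by (simp only: pb2)
      finally show ?thesis .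
    qed
    have "\<phi>' 1 / (2 * 2 powr q) * min (t powr 2) (min (t powr p) (t powr q))
        = t / 2 * (\<phi>' 1 * (m3 t / 2 powr q))" unfolding tm[symmetric] by (simp add: field_simps)
    also have "\<dots> \<le> t / 2 * (\<phi>' 1 * m3 (t/2))"
      using hm a t by (intro mult_left_mono) auto
    finally show ?thesis unfolding TN using comb i1 i2 i3 by linarith
  qed
  have neg: "trunc_N \<phi>' dm dp t = 0" if "t < 0" for t
    unfolding TN using that by simp
  show nn: "0 \<le> trunc_N \<phi>' dm dp t" for t
  proof (cases "t < 0")
    case True then show ?thesis using neg by simp
  next
    case False
    then have "0 \<le> \<phi>' 1 / (2 * 2 powr q) * min (t powr 2) (min (t powr p) (t powr q))"
      using a by simp
    then show ?thesis using lo[of t] False by linarith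
  qed
  show "mono (trunc_N \<phi>' dm dp)"
  proof (rule monoI)
    fix x y :: real assume xy: "x \<le> y"
    show "trunc_N \<phi>' dm dp x \<le> trunc_N \<phi>' dm dp y"
    proof (cases "x < 0")
      case True then show ?thesis using neg nn by simp
    next
      case False
      have comb: "integral {0..x} f + integral {x..y} f = integral {0..y} f"
        by (rule Henstock_Kurzweil_Integration.integral_combine[OF _ _ fint]) (use False xy in auto)
      have "0 \<le> integral {x..y} f"
        by (rule integral_nonneg[OF fint]) (use f_nn False in auto)
      then show ?thesis unfolding TN using comb by linarith
    qed
  qed
qed


lemma Inf_le_of_all_above:
  fixes S :: "real set"
  assumes all: "\<And>r. r > y \<Longrightarrow> r \<in> S" and bb: "bdd_below S"
  shows "Inf S \<le> y"
proof (rule ccontr)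
  assume "\<not> Inf S \<le> y"
  then have yl: "y < Inf S" by simp
  have "(y + Inf S) / 2 \<in> S" using all yl by simp
  then have "Inf S \<le> (y + Inf S) / 2" using bb by (rule cInf_lower)
  then show False using yl by (simp add: field_simps)
qed

lemma powr_le_self:
  fixes x a :: real
  assumes "0 \<le> x" "x \<le> 1" "1 \<le> a"
  shows "x powr a \<le> x"
proof (cases "x = 0")
  case True then show ?thesis by simp
next
  case False then show ?thesis using assms powr_le_one_le by simp
qed

lemma Lp_norm_nonneg: "0 \<le> Lp_norm a \<Omega> v"
  unfolding Lp_norm_def by simp

lemma Lp_norm_pow:
  assumes v: "v \<in> Lp_space a \<Omega>" and a: "a > 0"
  shows "(\<integral>\<^sup>+ x. ennreal (\<bar>v x\<bar> powr a) \<partial>(lebesgue_on \<Omega>)) = ennreal (Lp_norm a \<Omega> v powr a)"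
proof -
  let ?I = "\<integral>\<^sup>+ x. ennreal (\<bar>v x\<bar> powr a) \<partial>(lebesgue_on \<Omega>)"
  have fin: "?I < \<infinity>" using v unfolding Lp_space_def by simp
  have "Lp_norm a \<Omega> v powr a = enn2real ?I"
    unfolding Lp_norm_def using a by (simp add: powr_powr)
  then show ?thesis using fin by simp
qed

lemma scale_int:
  fixes v :: "'n::euclidean_space \<Rightarrow> real"
  assumes v: "v \<in> Lp_space a \<Omega>" and a: "a > 0" and r: "r > 0"
  shows "(\<integral>\<^sup>+ x. ennreal ((\<bar>v x\<bar> / r) powr a) \<partial>(lebesgue_on \<Omega>)) = ennreal ((Lp_norm a \<Omega> v / r) powr a)"
proof -
  have vm: "v \<in> borel_measurable (lebesgue_on \<Omega>)" using v unfolding Lp_space_def by simp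
  have "(\<integral>\<^sup>+ x. ennreal ((\<bar>v x\<bar> / r) powr a) \<partial>(lebesgue_on \<Omega>))
      = (\<integral>\<^sup>+ x. ennreal (\<bar>v x\<bar> powr a) * ennreal (1 / r powr a) \<partial>(lebesgue_on \<Omega>))"
    by (rule nn_integral_cong) (simp add: powr_divide ennreal_mult[symmetric])
  also have "\<dots> = (\<integral>\<^sup>+ x. ennreal (\<bar>v x\<bar> powr a) \<partial>(lebesgue_on \<Omega>)) * ennreal (1 / r powr a)"
    by (rule nn_integral_multc) (use vm in measurable)
  also have "\<dots> = ennreal (Lp_norm a \<Omega> v powr a) * ennreal (1 / r powr a)"
    using Lp_norm_pow[OF v a] by simp
  also have "\<dots> = ennreal ((Lp_norm a \<Omega> v / r) powr a)"
    by (simp add: powr_divide ennreal_mult[symmetric] Lp_norm_nonneg)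
  finally show ?thesis .
qed


lemma emb1:
  fixes \<Phi> :: "real \<Rightarrow> real" and \<Omega> :: "'n::euclidean_space set"
  assumes up: "\<And>t. 0 \<le> t \<Longrightarrow> \<Phi> t \<le> K * (t powr 2 + t powr p + t powr q)"
    and K: "0 \<le> K" and p: "1 \<le> p" and q: "1 \<le> q"
    and v: "v \<in> Lp_space p \<Omega> \<inter> Lp_space q \<Omega> \<inter> Lp_space 2 \<Omega>"
  shows "v \<in> Orlicz_space \<Phi> \<Omega> \<and> lux_norm \<Phi> \<Omega> v \<le> max 1 (3 * K) * inter3_norm p q \<Omega> v"
proof -
  define lam where "lam = max 1 (3 * K)"
  define N where "N = inter3_norm p q \<Omega> v"
  let ?M = "lebesgue_on \<Omega>"
  have vp: "v \<in> Lp_space p \<Omega>" and vq: "v \<in> Lp_space q \<Omega>" and v2: "v \<in> Lp_space 2 \<Omega>" using v by auto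
  have vm: "v \<in> borel_measurable ?M" using vp unfolding Lp_space_def by simp
  have lam: "1 \<le> lam" "3 * K \<le> lam" unfolding lam_def by auto
  have Nge: "Lp_norm p \<Omega> v \<le> N" "Lp_norm q \<Omega> v \<le> N" "Lp_norm 2 \<Omega> v \<le> N"
    unfolding N_def inter3_norm_def by auto
  have N0: "0 \<le> N" using Nge(3) Lp_norm_nonneg[of 2 \<Omega> v] by linarith
  have key: "r > 0 \<and> orlicz_modular \<Phi> \<Omega> v r \<le> 1" if r: "r > lam * N" for r
  proof -
    have lN: "0 \<le> lam * N" using lam N0 by simp
    have r0: "r > 0" using r lN by linarith
    have NR: "N / r \<le> 1 / lam"
    proof -
      have l0: "lam > 0" using lam by linarith
      have e: "N / r = (lam * N / r) / lam" using l0 by simp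
      have "lam * N / r \<le> 1" using r r0 by simp
      then have "(lam * N / r) / lam \<le> 1 / lam" using l0 by (intro divide_right_mono) auto
      then show ?thesis using e by linarith
    qed
    have J: "(\<integral>\<^sup>+ x. ennreal ((\<bar>v x\<bar> / r) powr a) \<partial>?M) \<le> ennreal (1 / lam)"
      if va: "v \<in> Lp_space a \<Omega>" and a1: "1 \<le> a" and aN: "Lp_norm a \<Omega> v \<le> N" for a
    proof -
      have x0: "0 \<le> Lp_norm a \<Omega> v / r" using r0 by (intro divide_nonneg_pos Lp_norm_nonneg)
      have x1: "Lp_norm a \<Omega> v / r \<le> 1 / lam" using aN r0 NR
        by (meson divide_right_mono less_imp_le order.trans)
      have "1 / lam \<le> 1" using lam by simp
      then have "(Lp_norm a \<Omega> v / r) powr a \<le> Lp_norm a \<Omega> v / r"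
        using powr_le_self[OF x0 _ a1] x1 by linarith
      then have "(Lp_norm a \<Omega> v / r) powr a \<le> 1 / lam" using x1 by linarith
      then show ?thesis using scale_int[OF va _ r0] a1 by (simp add: ennreal_leI)
    qed
    note Jp = J[OF vp p Nge(1)] and Jq = J[OF vq q Nge(2)]
    have J2: "(\<integral>\<^sup>+ x. ennreal ((\<bar>v x\<bar> / r) powr 2) \<partial>?M) \<le> ennreal (1 / lam)" using J[OF v2 _ Nge(3)] by simp
    have "orlicz_modular \<Phi> \<Omega> v r \<le> (\<integral>\<^sup>+ x. ennreal K * (ennreal ((\<bar>v x\<bar> / r) powr 2)
        + ennreal ((\<bar>v x\<bar> / r) powr p) + ennreal ((\<bar>v x\<bar> / r) powr q)) \<partial>?M)"
      unfolding orlicz_modular_def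
    proof (rule nn_integral_mono)
      fix x
      have "\<Phi> (\<bar>v x\<bar> / r) \<le> K * ((\<bar>v x\<bar> / r) powr 2 + (\<bar>v x\<bar> / r) powr p + (\<bar>v x\<bar> / r) powr q)"
        using up[of "\<bar>v x\<bar> / r"] r0 by simp
      then have "ennreal (\<Phi> (\<bar>v x\<bar> / r)) \<le> ennreal (K * ((\<bar>v x\<bar> / r) powr 2 + (\<bar>v x\<bar> / r) powr p + (\<bar>v x\<bar> / r) powr q))"
        by (rule ennreal_leI)
      also have "\<dots> = ennreal K * (ennreal ((\<bar>v x\<bar> / r) powr 2) + ennreal ((\<bar>v x\<bar> / r) powr p) + ennreal ((\<bar>v x\<bar> / r) powr q))"
      proof -
        define A where "A = (\<bar>v x\<bar> / r) powr 2"
        define B where "B = (\<bar>v x\<bar> / r) powr p"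
        define C where "C = (\<bar>v x\<bar> / r) powr q"
        have nn: "0 \<le> A" "0 \<le> B" "0 \<le> C" unfolding A_def B_def C_def by simp_all
        have "ennreal (K * (A + B + C)) = ennreal K * ennreal (A + B + C)" by (rule ennreal_mult'[OF K])
        also have "ennreal (A + B + C) = ennreal (A + B) + ennreal C" by (rule ennreal_plus) (use nn in auto)
        also have "ennreal (A + B) = ennreal A + ennreal B" by (rule ennreal_plus) (use nn in auto)
        finally show ?thesis unfolding A_def B_def C_def .
      qed
      finally show "ennreal (\<Phi> (\<bar>v x\<bar> / r)) \<le> ennreal K * (ennreal ((\<bar>v x\<bar> / r) powr 2) + ennreal ((\<bar>v x\<bar> / r) powr p) + ennreal ((\<bar>v x\<bar> / r) powr q))" .
    qed
    also have "\<dots> = ennreal K * ((\<integral>\<^sup>+ x. ennreal ((\<bar>v x\<bar> / r) powr 2) \<partial>?M)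
        + (\<integral>\<^sup>+ x. ennreal ((\<bar>v x\<bar> / r) powr p) \<partial>?M) + (\<integral>\<^sup>+ x. ennreal ((\<bar>v x\<bar> / r) powr q) \<partial>?M))"
    proof -
      have m: "\<And>a. (\<lambda>x. ennreal ((\<bar>v x\<bar> / r) powr a)) \<in> borel_measurable ?M"
        using vm by measurable
      have "(\<integral>\<^sup>+ x. ennreal K * (ennreal ((\<bar>v x\<bar> / r) powr 2)
        + ennreal ((\<bar>v x\<bar> / r) powr p) + ennreal ((\<bar>v x\<bar> / r) powr q)) \<partial>?M)
        = ennreal K * (\<integral>\<^sup>+ x. (ennreal ((\<bar>v x\<bar> / r) powr 2)
        + ennreal ((\<bar>v x\<bar> / r) powr p) + ennreal ((\<bar>v x\<bar> / r) powr q)) \<partial>?M)"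
        by (rule nn_integral_cmult) (intro borel_measurable_add m)
      also have "(\<integral>\<^sup>+ x. (ennreal ((\<bar>v x\<bar> / r) powr 2)
        + ennreal ((\<bar>v x\<bar> / r) powr p) + ennreal ((\<bar>v x\<bar> / r) powr q)) \<partial>?M)
        = (\<integral>\<^sup>+ x. (ennreal ((\<bar>v x\<bar> / r) powr 2)
        + ennreal ((\<bar>v x\<bar> / r) powr p)) \<partial>?M) + (\<integral>\<^sup>+ x. ennreal ((\<bar>v x\<bar> / r) powr q) \<partial>?M)"
        by (rule nn_integral_add) (intro borel_measurable_add m)+
      also have "(\<integral>\<^sup>+ x. (ennreal ((\<bar>v x\<bar> / r) powr 2)
        + ennreal ((\<bar>v x\<bar> / r) powr p)) \<partial>?M) = (\<integral>\<^sup>+ x. ennreal ((\<bar>v x\<bar> / r) powr 2) \<partial>?M)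
        + (\<integral>\<^sup>+ x. ennreal ((\<bar>v x\<bar> / r) powr p) \<partial>?M)"
        by (rule nn_integral_add) (intro borel_measurable_add m)+
      finally show ?thesis .
    qed
    also have "\<dots> \<le> ennreal K * (ennreal (1 / lam) + ennreal (1 / lam) + ennreal (1 / lam))"
      using Jp Jq J2 by (intro mult_left_mono add_mono) auto
    also have "\<dots> = ennreal (K * (3 / lam))"
    proof -
      have l0: "0 \<le> 1 / lam" using lam by simp
      have "ennreal (1 / lam + 1 / lam + 1 / lam) = ennreal (1 / lam + 1 / lam) + ennreal (1 / lam)"
        by (rule ennreal_plus) (use l0 in auto)
      also have "ennreal (1 / lam + 1 / lam) = ennreal (1 / lam) + ennreal (1 / lam)"
        by (rule ennreal_plus) (use l0 in auto)
      finally have h: "ennreal (1 / lam) + ennreal (1 / lam) + ennreal (1 / lam) = ennreal (3 / lam)"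
        by simp
      have "ennreal (K * (3 / lam)) = ennreal K * ennreal (3 / lam)" by (rule ennreal_mult'[OF K])
      then show ?thesis unfolding h by simp
    qed
    also have "\<dots> \<le> 1"
    proof -
      have l0: "lam > 0" using lam by linarith
      have "K * (3 / lam) = (3 * K) / lam" by simp
      also have "\<dots> \<le> 1" using lam l0 by simp
      finally show ?thesis by (simp add: ennreal_le_1)
    qed
    finally show ?thesis using r0 by simp
  qed
  have "v \<in> Orlicz_space \<Phi> \<Omega>"
    unfolding Orlicz_space_def using vm key[of "lam * N + 1"] by auto
  moreover have "lux_norm \<Phi> \<Omega> v \<le> lam * N"
    unfolding lux_norm_def
    by (rule Inf_le_of_all_above) (use key in \<open>auto intro: bdd_belowI[of _ 0]\<close>)
  ultimately show ?thesis unfolding lam_def N_def by simp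
qed


lemma piece:
  fixes \<Phi> :: "real \<Rightarrow> real" and \<Omega> :: "'n::euclidean_space set" and v :: "'n \<Rightarrow> real"
  assumes vm: "v \<in> borel_measurable (lebesgue_on \<Omega>)"
    and Qm: "{x \<in> space (lebesgue_on \<Omega>). Q x} \<in> sets (lebesgue_on \<Omega>)"
    and \<Phi>m: "\<Phi> \<in> borel_measurable borel"
    and r: "r > 0" and mod: "orlicz_modular \<Phi> \<Omega> v r \<le> 1"
    and a: "1 \<le> a" and c: "0 < c" "c \<le> 1"
    and bnd: "\<And>x. x \<in> \<Omega> \<Longrightarrow> Q x \<Longrightarrow> c * (\<bar>v x\<bar> / r) powr a \<le> \<Phi> (\<bar>v x\<bar> / r)"
    and \<Phi>nn: "\<And>t. 0 \<le> \<Phi> t"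
  shows "(\<lambda>x. if Q x then v x else 0) \<in> Lp_space a \<Omega> \<and> Lp_norm a \<Omega> (\<lambda>x. if Q x then v x else 0) \<le> r / c"
proof -
  let ?M = "lebesgue_on \<Omega>"
  let ?w = "\<lambda>x. if Q x then v x else 0"
  let ?I = "\<integral>\<^sup>+ x. ennreal (\<bar>?w x\<bar> powr a) \<partial>?M"
  have wm: "?w \<in> borel_measurable ?M"
    by (rule measurable_If[OF vm _ Qm]) simp
  have k0: "0 \<le> r powr a / c" using c by simp
  have pt: "ennreal (\<bar>?w x\<bar> powr a) \<le> ennreal (r powr a / c) * ennreal (\<Phi> (\<bar>v x\<bar> / r))"
    if x: "x \<in> space ?M" for x
  proof (cases "Q x")
    case True
    have xO: "x \<in> \<Omega>" using x by simp
    have "\<bar>v x\<bar> powr a = r powr a * (\<bar>v x\<bar> / r) powr a" using r by (simp add: powr_divide)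
    also have "\<dots> \<le> r powr a * (\<Phi> (\<bar>v x\<bar> / r) / c)"
    proof (rule mult_left_mono)
      show "(\<bar>v x\<bar> / r) powr a \<le> \<Phi> (\<bar>v x\<bar> / r) / c"
        using bnd[OF xO True] c by (simp add: field_simps)
    qed simp
    also have "\<dots> = r powr a / c * \<Phi> (\<bar>v x\<bar> / r)" by simp
    finally have "\<bar>?w x\<bar> powr a \<le> r powr a / c * \<Phi> (\<bar>v x\<bar> / r)" using True by simp
    then have "ennreal (\<bar>?w x\<bar> powr a) \<le> ennreal (r powr a / c * \<Phi> (\<bar>v x\<bar> / r))"
      by (rule ennreal_leI)
    also have "\<dots> = ennreal (r powr a / c) * ennreal (\<Phi> (\<bar>v x\<bar> / r))"
      by (rule ennreal_mult'[OF k0])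
    finally show ?thesis .
  next
    case False
    then show ?thesis by simp
  qed
  have \<Phi>vm: "(\<lambda>x. ennreal (\<Phi> (\<bar>v x\<bar> / r))) \<in> borel_measurable ?M"
  proof -
    have "(\<lambda>x. \<bar>v x\<bar> / r) \<in> borel_measurable ?M" using vm by measurable
    then have "(\<lambda>x. \<Phi> (\<bar>v x\<bar> / r)) \<in> borel_measurable ?M"
      using measurable_compose[OF _ \<Phi>m] by blast
    then show ?thesis by (rule measurable_compose[OF _ measurable_ennreal])
  qed
  have "?I \<le> (\<integral>\<^sup>+ x. ennreal (r powr a / c) * ennreal (\<Phi> (\<bar>v x\<bar> / r)) \<partial>?M)"
    by (rule nn_integral_mono) (rule pt)
  also have "\<dots> = ennreal (r powr a / c) * orlicz_modular \<Phi> \<Omega> v r"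
    unfolding orlicz_modular_def by (rule nn_integral_cmult[OF \<Phi>vm])
  also have "\<dots> \<le> ennreal (r powr a / c) * 1"
    by (rule mult_left_mono[OF mod]) simp
  finally have Ib: "?I \<le> ennreal (r powr a / c)" by simp
  then have fin: "?I < \<infinity>" by (rule le_less_trans) simp
  have inL: "?w \<in> Lp_space a \<Omega>" unfolding Lp_space_def using wm fin by simp
  have e2: "enn2real ?I \<le> r powr a / c"
    using enn2real_mono[OF Ib] k0 by simp
  have "Lp_norm a \<Omega> ?w = enn2real ?I powr (1 / a)" unfolding Lp_norm_def by simp
  also have "\<dots> \<le> (r powr a / c) powr (1 / a)"
    by (rule powr_mono2) (use e2 a in auto)
  also have "\<dots> = r / c powr (1 / a)"
    using r a by (simp add: powr_divide powr_powr)
  also have "\<dots> \<le> r / c"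
  proof -
    have "c powr 1 \<le> c powr (1 / a)" by (rule powr_mono') (use a c in auto)
    then have "c \<le> c powr (1 / a)" using c by simp
    then show ?thesis using r c by (intro divide_left_mono) auto
  qed
  finally show ?thesis using inL by simp
qed


lemma emb2:
  fixes \<Phi> :: "real \<Rightarrow> real" and \<Omega> :: "'n::euclidean_space set"
  assumes lo: "\<And>t. 0 \<le> t \<Longrightarrow> c * min (t powr 2) (min (t powr p) (t powr q)) \<le> \<Phi> t"
    and c: "0 < c" "c \<le> 1" and p: "1 \<le> p" and q: "1 \<le> q"
    and \<Phi>m: "\<Phi> \<in> borel_measurable borel" and \<Phi>nn: "\<And>t. 0 \<le> \<Phi> t"
    and v: "v \<in> Orlicz_space \<Phi> \<Omega>"
  shows "v \<in> sum3_space p q \<Omega> \<and> sum3_norm p q \<Omega> v \<le> (3 / c) * lux_norm \<Phi> \<Omega> v"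
proof -
  let ?M = "lebesgue_on \<Omega>"
  define S where "S = {r. r > 0 \<and> orlicz_modular \<Phi> \<Omega> v r \<le> 1}"
  have vm: "v \<in> borel_measurable ?M" using v unfolding Orlicz_space_def by simp
  have Sne: "S \<noteq> {}" using v unfolding Orlicz_space_def S_def by auto
  have Sbb: "bdd_below S" unfolding S_def by (rule bdd_belowI[of _ 0]) auto
  have dec: "\<exists>fgh \<in> sum3_decomps p q \<Omega> v. (case fgh of (f, g, h) \<Rightarrow> Lp_norm p \<Omega> f + Lp_norm q \<Omega> g + Lp_norm 2 \<Omega> h) \<le> 3 * r / c"
    if rS: "r \<in> S" for r
  proof -
    have r: "r > 0" and mod: "orlicz_modular \<Phi> \<Omega> v r \<le> 1" using rS unfolding S_def by auto
    define t where "t x = \<bar>v x\<bar> / r" for x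
    define m where "m x = min (t x powr 2) (min (t x powr p) (t x powr q))" for x
    define Qh where "Qh x = (m x = t x powr 2)" for x
    define Qf where "Qf x = (\<not> Qh x \<and> m x = t x powr p)" for x
    define Qg where "Qg x = (\<not> Qh x \<and> \<not> m x = t x powr p)" for x
    have tm: "t \<in> borel_measurable ?M" unfolding t_def[abs_def] using vm by measurable
    have mm: "m \<in> borel_measurable ?M" unfolding m_def[abs_def] using tm by measurable
    have sets: "{x \<in> space ?M. Qh x} \<in> sets ?M" "{x \<in> space ?M. Qf x} \<in> sets ?M" "{x \<in> space ?M. Qg x} \<in> sets ?M"
      unfolding Qh_def Qf_def Qg_def using tm mm by measurable
    have t0: "0 \<le> t x" for x unfolding t_def using r by simp
    have mlo: "c * m x \<le> \<Phi> (t x)" for x unfolding m_def using lo[OF t0] .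
    have bh: "c * t x powr 2 \<le> \<Phi> (t x)" if "Qh x" for x using mlo[of x] that unfolding Qh_def by simp
    have bf: "c * t x powr p \<le> \<Phi> (t x)" if "Qf x" for x using mlo[of x] that unfolding Qf_def by simp
    have bg: "c * t x powr q \<le> \<Phi> (t x)" if "Qg x" for x
    proof -
      have "m x = t x powr q" using that unfolding Qg_def Qh_def m_def by (auto simp: min_def split: if_splits)
      then show ?thesis using mlo[of x] by simp
    qed
    define f where "f = (\<lambda>x. if Qf x then v x else 0)"
    define g where "g = (\<lambda>x. if Qg x then v x else 0)"
    define h where "h = (\<lambda>x. if Qh x then v x else 0)"
    have F: "f \<in> Lp_space p \<Omega> \<and> Lp_norm p \<Omega> f \<le> r / c" unfolding f_def
      by (rule piece[OF vm sets(2) \<Phi>m r mod p c _ \<Phi>nn]) (use bf in \<open>simp add: t_def\<close>)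
    have G: "g \<in> Lp_space q \<Omega> \<and> Lp_norm q \<Omega> g \<le> r / c" unfolding g_def
      by (rule piece[OF vm sets(3) \<Phi>m r mod q c _ \<Phi>nn]) (use bg in \<open>simp add: t_def\<close>)
    have H: "h \<in> Lp_space 2 \<Omega> \<and> Lp_norm 2 \<Omega> h \<le> r / c" unfolding h_def
      by (rule piece[OF vm sets(1) \<Phi>m r mod _ c _ \<Phi>nn]) (use bh in \<open>simp_all add: t_def\<close>)
    have sum: "v x = f x + g x + h x" for x unfolding f_def g_def h_def Qf_def Qg_def by auto
    have "(f, g, h) \<in> sum3_decomps p q \<Omega> v" unfolding sum3_decomps_def using F G H sum by auto
    moreover have "Lp_norm p \<Omega> f + Lp_norm q \<Omega> g + Lp_norm 2 \<Omega> h \<le> 3 * r / c" using F G H by simp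
    ultimately show ?thesis by force
  qed
  have bdd: "bdd_below ((\<lambda>(f, g, h). Lp_norm p \<Omega> f + Lp_norm q \<Omega> g + Lp_norm 2 \<Omega> h) ` sum3_decomps p q \<Omega> v)"
    by (rule bdd_belowI[of _ 0]) (auto intro!: add_nonneg_nonneg Lp_norm_nonneg)
  have le: "sum3_norm p q \<Omega> v \<le> 3 * r / c" if rS: "r \<in> S" for r
  proof -
    obtain fgh where fgh: "fgh \<in> sum3_decomps p q \<Omega> v"
      "(case fgh of (f, g, h) \<Rightarrow> Lp_norm p \<Omega> f + Lp_norm q \<Omega> g + Lp_norm 2 \<Omega> h) \<le> 3 * r / c"
      using dec[OF rS] by blast
    have "sum3_norm p q \<Omega> v \<le> (case fgh of (f, g, h) \<Rightarrow> Lp_norm p \<Omega> f + Lp_norm q \<Omega> g + Lp_norm 2 \<Omega> h)"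
      unfolding sum3_norm_def by (rule cInf_lower[OF imageI[OF fgh(1)] bdd])
    then show ?thesis using fgh(2) by linarith
  qed
  obtain r0 where r0: "r0 \<in> S" using Sne by blast
  have sp: "v \<in> sum3_space p q \<Omega>" using dec[OF r0] unfolding sum3_space_def by auto
  have "sum3_norm p q \<Omega> v * c / 3 \<le> Inf S"
  proof (rule cInf_greatest[OF Sne])
    fix r assume "r \<in> S"
    then have "sum3_norm p q \<Omega> v \<le> 3 * r / c" by (rule le)
    then show "sum3_norm p q \<Omega> v * c / 3 \<le> r" using c by (simp add: field_simps)
  qed
  then have "sum3_norm p q \<Omega> v \<le> (3 / c) * Inf S" using c by (simp add: field_simps)
  then show ?thesis using sp unfolding lux_norm_def S_def by simp
qed


theorem lemmaA7:
  fixes \<phi> \<phi>' \<phi>'' :: "real \<Rightarrow> real" and \<Omega> :: "'n::euclidean_space set"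
  assumes "uniformly_convex \<phi> \<phi>' \<phi>''"
    and "open \<Omega>"
  shows "\<exists>C>0. \<forall>dm dp. 0 < dm \<and> dm \<le> 1 \<and> 1 \<le> dp \<longrightarrow>
     (\<forall>v. v \<in> Lp_space (p_minus \<phi>' \<phi>'') \<Omega> \<inter> Lp_space (p_plus \<phi>' \<phi>'') \<Omega> \<inter> Lp_space 2 \<Omega> \<longrightarrow>
        v \<in> Orlicz_space (trunc_N \<phi>' dm dp) \<Omega> \<and>
        lux_norm (trunc_N \<phi>' dm dp) \<Omega> v \<le> C * inter3_norm (p_minus \<phi>' \<phi>'') (p_plus \<phi>' \<phi>'') \<Omega> v) \<and>
     (\<forall>v. v \<in> Orlicz_space (trunc_N \<phi>' dm dp) \<Omega> \<longrightarrow>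
        v \<in> sum3_space (p_minus \<phi>' \<phi>'') (p_plus \<phi>' \<phi>'') \<Omega> \<and>
        sum3_norm (p_minus \<phi>' \<phi>'') (p_plus \<phi>' \<phi>'') \<Omega> v \<le> C * lux_norm (trunc_N \<phi>' dm dp) \<Omega> v)"
proof -
  note uc = assms(1)
  define p where "p = p_minus \<phi>' \<phi>''"
  define q where "q = p_plus \<phi>' \<phi>''"
  define a where "a = \<phi>' 1"
  define c where "c = min (a / (2 * 2 powr q)) 1"
  define C where "C = max (max 1 (3 * a)) (3 / c)"
  note P = phi_props[OF uc, folded p_def q_def]
  have p1: "1 \<le> p" and q1: "1 \<le> q" using P(1,2) by auto
  have a0: "a > 0" unfolding a_def using P(3) by simp
  have c0: "0 < c" "c \<le> 1" unfolding c_def using a0 by auto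
  have C1: "max 1 (3 * a) \<le> C" "3 / c \<le> C" unfolding C_def by auto
  have Cpos: "C > 0" using C1(1) by linarith
  show ?thesis
  proof (rule exI[of _ C], rule conjI[OF Cpos], intro allI impI)
    fix dm dp :: real assume d: "0 < dm \<and> dm \<le> 1 \<and> 1 \<le> dp"
    then have d': "0 < dm" "dm \<le> 1" "1 \<le> dp" by auto
    note T = truncN_props[OF uc d', folded p_def q_def a_def]
    {
      fix v assume v: "v \<in> Lp_space p \<Omega> \<inter> Lp_space q \<Omega> \<inter> Lp_space 2 \<Omega>"
      have E: "v \<in> Orlicz_space (trunc_N \<phi>' dm dp) \<Omega> \<and>
        lux_norm (trunc_N \<phi>' dm dp) \<Omega> v \<le> max 1 (3 * a) * inter3_norm p q \<Omega> v"
        by (rule emb1[OF T(1) less_imp_le[OF a0] p1 q1 v])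
      have N0: "0 \<le> inter3_norm p q \<Omega> v" unfolding inter3_norm_def
        using Lp_norm_nonneg[of p \<Omega> v] by simp
      have "max 1 (3 * a) * inter3_norm p q \<Omega> v \<le> C * inter3_norm p q \<Omega> v"
        using C1(1) N0 by (rule mult_right_mono)
      then have "v \<in> Orlicz_space (trunc_N \<phi>' dm dp) \<Omega> \<and>
        lux_norm (trunc_N \<phi>' dm dp) \<Omega> v \<le> C * inter3_norm p q \<Omega> v" using E by linarith
    }
    then have G1: "\<forall>v. v \<in> Lp_space (p_minus \<phi>' \<phi>'') \<Omega> \<inter> Lp_space (p_plus \<phi>' \<phi>'') \<Omega> \<inter> Lp_space 2 \<Omega> \<longrightarrow>
        v \<in> Orlicz_space (trunc_N \<phi>' dm dp) \<Omega> \<and>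
        lux_norm (trunc_N \<phi>' dm dp) \<Omega> v \<le> C * inter3_norm (p_minus \<phi>' \<phi>'') (p_plus \<phi>' \<phi>'') \<Omega> v"
      unfolding p_def q_def by blast
    {
      fix v assume v: "v \<in> Orlicz_space (trunc_N \<phi>' dm dp) \<Omega>"
      have lo: "c * min (t powr 2) (min (t powr p) (t powr q)) \<le> trunc_N \<phi>' dm dp t" if t: "0 \<le> t" for t
      proof -
        have "0 \<le> min (t powr 2) (min (t powr p) (t powr q))" by simp
        then have "c * min (t powr 2) (min (t powr p) (t powr q)) \<le> a / (2 * 2 powr q) * min (t powr 2) (min (t powr p) (t powr q))"
          unfolding c_def by (intro mult_right_mono) auto
        then show ?thesis using T(2)[OF t] by linarith
      qed
      have E: "v \<in> sum3_space p q \<Omega> \<and> sum3_norm p q \<Omega> v \<le> (3 / c) * lux_norm (trunc_N \<phi>' dm dp) \<Omega> v"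
        by (rule emb2[OF lo c0 p1 q1 borel_measurable_mono[OF T(4)] T(3) v])
      have L0: "0 \<le> lux_norm (trunc_N \<phi>' dm dp) \<Omega> v"
        unfolding lux_norm_def
        by (rule cInf_greatest) (use v in \<open>auto simp: Orlicz_space_def\<close>)
      have "(3 / c) * lux_norm (trunc_N \<phi>' dm dp) \<Omega> v \<le> C * lux_norm (trunc_N \<phi>' dm dp) \<Omega> v"
        using C1(2) L0 by (rule mult_right_mono)
      then have "v \<in> sum3_space p q \<Omega> \<and> sum3_norm p q \<Omega> v \<le> C * lux_norm (trunc_N \<phi>' dm dp) \<Omega> v"
        using E by linarith
    }
    then have G2: "\<forall>v. v \<in> Orlicz_space (trunc_N \<phi>' dm dp) \<Omega> \<longrightarrow>
        v \<in> sum3_space (p_minus \<phi>' \<phi>'') (p_plus \<phi>' \<phi>'') \<Omega> \<and>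
        sum3_norm (p_minus \<phi>' \<phi>'') (p_plus \<phi>' \<phi>'') \<Omega> v \<le> C * lux_norm (trunc_N \<phi>' dm dp) \<Omega> v"
      unfolding p_def q_def by blast
    show "(\<forall>v. v \<in> Lp_space (p_minus \<phi>' \<phi>'') \<Omega> \<inter> Lp_space (p_plus \<phi>' \<phi>'') \<Omega> \<inter> Lp_space 2 \<Omega> \<longrightarrow>
        v \<in> Orlicz_space (trunc_N \<phi>' dm dp) \<Omega> \<and>
        lux_norm (trunc_N \<phi>' dm dp) \<Omega> v \<le> C * inter3_norm (p_minus \<phi>' \<phi>'') (p_plus \<phi>' \<phi>'') \<Omega> v) \<and>
     (\<forall>v. v \<in> Orlicz_space (trunc_N \<phi>' dm dp) \<Omega> \<longrightarrow>
        v \<in> sum3_space (p_minus \<phi>' \<phi>'') (p_plus \<phi>' \<phi>'') \<Omega> \<and>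
        sum3_norm (p_minus \<phi>' \<phi>'') (p_plus \<phi>' \<phi>'') \<Omega> v \<le> C * lux_norm (trunc_N \<phi>' dm dp) \<Omega> v)"
      using G1 G2 by (rule conjI)
  qed
qed

end
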